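(* Let $A,B,C,q,z$ be complex numbers with $|q|<1$, $|z|<1$ (generic, so that all denominators are nonzero and all series converge). Then $${}_{2}\phi_{1}\Big[\genfrac{}{}{0pt}{}{A,B}{C};q,z\Big]=\sum_{n=0}^{\infty}\frac{(ABq/C,ABz/C;q)_n}{(q,z;q)_n}z^nq^{n(n-1)}\Big(1-\frac{ABzq^{2n}}{C}\Big)\,{}_{4}\phi_{3}\Big[\genfrac{}{}{0pt}{}{ABzq^n/C,\ ABzq^{2n+1}/C,\ C/A,\ C/B}{C,\ zq^n,\ ABzq^{2n}/C};q,\frac{ABzq^n}{C}\Big].$$
   Context: $(x;q)_n=\prod_{j=0}^{n-1}(1-xq^j)$ and $(x_1,\dots,x_m;q)_n=\prod_{i=1}^m(x_i;q)_n$. The basic hypergeometric series is ${}_{s+1}\phi_s\big[\genfrac{}{}{0pt}{}{a_1,\ldots,a_{s+1}}{b_1,\ldots,b_{s}};q,w\big]=\sum_{n\ge0}\frac{(a_1,\ldots,a_{s+1};q)_n}{(q,b_1,\ldots,b_s;q)_n}w^n$. *)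

theory Defs
  imports Complex_Main
begin

definition qpoch :: "complex \<Rightarrow> complex \<Rightarrow> nat \<Rightarrow> complex" where
  "qpoch x q n = (\<Prod>j<n. 1 - x * q ^ j)"

text \<open>(x_1,...,x_m;q)_n as a product over a list of parameters.\<close>
definition qpochs :: "complex list \<Rightarrow> complex \<Rightarrow> nat \<Rightarrow> complex" where
  "qpochs xs q n = (\<Prod>x\<leftarrow>xs. qpoch x q n)"

definition qphi_term :: "complex list \<Rightarrow> complex list \<Rightarrow> complex \<Rightarrow> complex \<Rightarrow> nat \<Rightarrow> complex" where
  "qphi_term as bs q w n = qpochs as q n / (qpoch q q n * qpochs bs q n) * w ^ n"

definition qphi :: "complex list \<Rightarrow> complex list \<Rightarrow> complex \<Rightarrow> complex \<Rightarrow> complex" where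
  "qphi as bs q w = (\<Sum>n. qphi_term as bs q w n)"

end

theory Submission
  imports Defs "HOL-Analysis.Analysis"
begin

lemma qpoch_0 [simp]: "qpoch x q 0 = 1" by (simp add: qpoch_def)
lemma qpoch_Suc: "qpoch x q (Suc n) = qpoch x q n * (1 - x * q ^ n)"
  by (simp add: qpoch_def)
lemma qpoch_Suc': "qpoch x q (Suc n) = (1 - x) * qpoch (x * q) q n"
  unfolding qpoch_def by (subst prod.lessThan_Suc_shift) (simp add: mult.assoc)
lemma qpoch_add: "qpoch x q (n + k) = qpoch x q n * qpoch (x * q ^ n) q k"
  by (induction k) (simp_all add: qpoch_Suc power_add mult.assoc)

lemma ratio_summable:
  fixes f :: "nat \<Rightarrow> 'a::real_normed_field"
  assumes fr: "\<And>n. f (Suc n) = r n * f n" and lim: "r \<longlonglongrightarrow> l" and l: "norm l < 1"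
  shows "summable (\<lambda>n. norm (f n))"
proof -
  define c where "c = (1 + norm l) / 2"
  have c: "norm l < c" "c < 1" using l by (auto simp: c_def)
  have "eventually (\<lambda>n. norm (r n) < c) sequentially"
    using order_tendstoD(2)[OF tendsto_norm[OF lim] c(1)] .
  then obtain N where N: "\<And>n. n \<ge> N \<Longrightarrow> norm (r n) < c"
    by (auto simp: eventually_at_top_linorder)
  show ?thesis
  proof (rule summable_ratio_test[OF c(2)])
    fix n assume "n \<ge> N"
    hence "norm (r n) \<le> c" using N by force
    thus "norm (norm (f (Suc n))) \<le> c * norm (norm (f n))"
      by (simp add: fr norm_mult mult_right_mono)
  qed
qed

lemma norm_1_minus_ge: "norm (1 - w::complex) \<ge> 1 - norm w"
  using norm_triangle_ineq2[of 1 w] by simp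
lemma norm_1_minus_le: "norm (1 - w::complex) \<le> 1 + norm w"
  using norm_triangle_ineq4[of 1 w] by simp

lemma norm_qpow_le: "norm (q::complex) \<le> 1 \<Longrightarrow> norm (w * q ^ i) \<le> norm w"
  by (simp add: norm_mult norm_power mult_left_le power_le_one)

lemma qpoch_nz: "norm (q::complex) \<le> 1 \<Longrightarrow> norm w < 1 \<Longrightarrow> qpoch w q n \<noteq> 0"
proof -
  assume q: "norm q \<le> 1" and w: "norm w < 1"
  have "1 - w * q ^ i \<noteq> 0" for i
  proof
    assume "1 - w * q ^ i = 0"
    hence "norm (w * q ^ i) = 1" by (metis eq_iff_diff_eq_0 norm_one)
    with norm_qpow_le[OF q, of w i] w show False by simp
  qed
  thus ?thesis by (simp add: qpoch_def)
qed

lemma qpoch_qq_nz: "norm (q::complex) < 1 \<Longrightarrow> qpoch q q n \<noteq> 0"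
  by (rule qpoch_nz) auto

lemma qpoch_norm_le: "norm (q::complex) \<le> 1 \<Longrightarrow> norm (qpoch w q n) \<le> (1 + norm w) ^ n"
proof (induction n)
  case (Suc n)
  have "norm (1 - w * q ^ n) \<le> 1 + norm w"
    using norm_1_minus_le[of "w * q ^ n"] norm_qpow_le[OF Suc.prems, of w n] by linarith
  hence "norm (qpoch w q n) * norm (1 - w * q ^ n) \<le> (1 + norm w) ^ n * (1 + norm w)"
    using Suc by (intro mult_mono) auto
  thus ?case by (simp add: qpoch_Suc norm_mult mult.commute)
qed simp

lemma qpoch_norm_ge: "norm (q::complex) \<le> 1 \<Longrightarrow> norm w \<le> 1 \<Longrightarrow> (1 - norm w) ^ n \<le> norm (qpoch w q n)"
proof (induction n)
  case (Suc n)
  have "norm (1 - w * q ^ n) \<ge> 1 - norm w"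
    using norm_1_minus_ge[of "w * q ^ n"] norm_qpow_le[OF Suc.prems(1), of w n] by linarith
  moreover have "0 \<le> 1 - norm w" using Suc by simp
  ultimately have "(1 - norm w) ^ n * (1 - norm w) \<le> norm (qpoch w q n) * norm (1 - w * q ^ n)"
    using Suc by (intro mult_mono) auto
  thus ?case by (simp add: qpoch_Suc norm_mult mult.commute)
qed simp

lemma qpoch_convergent_prod:
  assumes "norm (q::complex) < 1"
  shows "convergent_prod (\<lambda>i. 1 - w * q ^ i)"
proof (rule abs_convergent_prod_imp_convergent_prod, rule summable_imp_abs_convergent_prod)
  have "summable (\<lambda>i. norm w * norm q ^ i)"
    using assms by (intro summable_mult summable_geometric) simp
  thus "summable (\<lambda>i. norm (1 - w * q ^ i - 1))" by (simp add: norm_mult norm_power)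
qed

lemma qpoch_lim:
  assumes "norm (q::complex) < 1"
  obtains L where "(\<lambda>n. qpoch w q n) \<longlonglongrightarrow> L" and "(\<forall>i. 1 - w * q ^ i \<noteq> 0) \<Longrightarrow> L \<noteq> 0"
proof -
  let ?f = "\<lambda>i. 1 - w * q ^ i"
  have cp: "convergent_prod ?f" by (rule qpoch_convergent_prod[OF assms])
  have "(\<lambda>n. \<Prod>i\<le>n. ?f i) \<longlonglongrightarrow> prodinf ?f" by (rule convergent_prod_LIMSEQ[OF cp])
  moreover have "(\<lambda>n. \<Prod>i\<le>n. ?f i) = (\<lambda>n. qpoch w q (Suc n))"
    by (simp add: qpoch_def lessThan_Suc_atMost)
  ultimately have L: "(\<lambda>n. qpoch w q n) \<longlonglongrightarrow> prodinf ?f"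
    using LIMSEQ_imp_Suc by metis
  show ?thesis
  proof (rule that[OF L])
    assume nz: "\<forall>i. 1 - w * q ^ i \<noteq> 0"
    show "prodinf ?f \<noteq> 0"
    proof
      assume "prodinf ?f = 0"
      hence "(\<lambda>n. \<Prod>i\<le>n. ?f i) \<longlonglongrightarrow> 0" using convergent_prod_LIMSEQ[OF cp] by simp
      hence "\<exists>i. ?f i = 0" using convergent_prod_to_zero_iff[OF cp] by blast
      with nz show False by blast
    qed
  qed
qed

lemma dich_aux:
  fixes N Dn :: "nat \<Rightarrow> complex"
  assumes "N \<longlonglongrightarrow> LN" "LN \<noteq> 0" "Dn \<longlonglongrightarrow> LD"
    and "(\<lambda>k. N k / Dn k * x ^ k) \<longlonglongrightarrow> 0" and "\<And>k. Dn k \<noteq> 0"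
  shows "norm x < 1"
proof (rule ccontr)
  assume "\<not> norm x < 1"
  hence x: "norm x \<ge> 1" by simp
  have "(\<lambda>k. N k / Dn k) \<longlonglongrightarrow> 0"
  proof (rule tendsto_0_le[OF assms(4), of _ 1])
    show "\<forall>\<^sub>F k in sequentially. norm (N k / Dn k) \<le> norm (N k / Dn k * x ^ k) * 1"
    proof (intro always_eventually allI)
      fix k
      have "norm (N k / Dn k) * 1 \<le> norm (N k / Dn k) * norm x ^ k"
        using x by (intro mult_left_mono one_le_power) auto
      thus "norm (N k / Dn k) \<le> norm (N k / Dn k * x ^ k) * 1"
        by (simp only: norm_mult norm_power)
    qed
  qed
  hence "(\<lambda>k. N k / Dn k * Dn k) \<longlonglongrightarrow> 0 * LD" by (intro tendsto_mult assms(3))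
  hence "N \<longlonglongrightarrow> 0" using assms(5) by simp
  with assms(1,2) LIMSEQ_unique show False by blast
qed

definition qE :: "complex \<Rightarrow> complex \<Rightarrow> complex \<Rightarrow> complex" where
  "qE q g Z = (\<Sum>j. qpoch g q j / qpoch q q j * Z ^ j)"

lemma qpow_lim0: "norm (q::complex) < 1 \<Longrightarrow> (\<lambda>n. q ^ n) \<longlonglongrightarrow> 0"
  by (rule LIMSEQ_power_zero)

lemma one_minus_qq_nz: "norm (q::complex) < 1 \<Longrightarrow> 1 - q * q ^ j \<noteq> 0"
  using qpoch_qq_nz[of q "Suc j"] by (simp add: qpoch_Suc)

lemma qE_summable:
  assumes q: "norm q < 1" and Z: "norm Z < 1"
  shows "summable (\<lambda>j. norm (qpoch g q j / qpoch q q j * Z ^ j))"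
proof (rule ratio_summable)
  show "qpoch g q (Suc j) / qpoch q q (Suc j) * Z ^ Suc j =
        ((1 - g * q ^ j) / (1 - q * q ^ j) * Z) * (qpoch g q j / qpoch q q j * Z ^ j)" for j
    using one_minus_qq_nz[OF q, of j] qpoch_qq_nz[OF q, of j]
    by (simp add: qpoch_Suc field_simps)
  have "(\<lambda>j. (1 - g * q ^ j) / (1 - q * q ^ j) * Z) \<longlonglongrightarrow> (1 - g * 0) / (1 - q * 0) * Z"
    by (intro tendsto_intros qpow_lim0 q) simp
  thus "(\<lambda>j. (1 - g * q ^ j) / (1 - q * q ^ j) * Z) \<longlonglongrightarrow> Z" by simp
qed (use Z in auto)

lemma norm_qZ: "norm (q::complex) < 1 \<Longrightarrow> norm Z < 1 \<Longrightarrow> norm (q ^ k * Z) < 1"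
proof -
  assume q: "norm q < 1" and Z: "norm Z < 1"
  have "norm q ^ k * norm Z \<le> 1 * norm Z"
    using q by (intro mult_right_mono power_le_one) auto
  thus ?thesis using Z by (simp add: norm_mult norm_power)
qed

lemma qE_fe:
  assumes q: "norm q < 1" and Z: "norm Z < 1"
  shows "(1 - Z) * qE q g Z = (1 - g * Z) * qE q g (q * Z)"
proof -
  define e where "e = (\<lambda>j. qpoch g q j / qpoch q q j * Z ^ j)"
  define e' where "e' = (\<lambda>j. qpoch g q j / qpoch q q j * (q * Z) ^ j)"
  have qZ: "norm (q * Z) < 1" using norm_qZ[OF q Z, of 1] by simp
  have se: "summable e" unfolding e_def by (rule summable_norm_cancel[OF qE_summable[OF q Z]])
  have se': "summable e'" unfolding e'_def by (rule summable_norm_cancel[OF qE_summable[OF q qZ]])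
  have step: "e (Suc j) - e' (Suc j) = Z * (e j - g * e' j)" for j
  proof -
    define c where "c = qpoch g q j / qpoch q q j"
    define T where "T = c * (1 - g * q ^ j) / (1 - q * q ^ j)"
    have nz: "1 - q * q ^ j \<noteq> 0" by (rule one_minus_qq_nz[OF q])
    have "e (Suc j) = T * Z ^ Suc j"
      by (simp add: e_def c_def T_def qpoch_Suc)
    moreover have "e' (Suc j) = T * (q * q ^ j) * Z ^ Suc j"
      by (simp add: e'_def c_def T_def qpoch_Suc power_mult_distrib)
    ultimately have "e (Suc j) - e' (Suc j) = T * (1 - q * q ^ j) * Z ^ Suc j"
      by (simp add: algebra_simps)
    also have "T * (1 - q * q ^ j) * Z ^ Suc j = c * (1 - g * q ^ j) * Z ^ Suc j"
      using nz by (simp add: T_def)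
    also have "\<dots> = Z * (e j - g * e' j)"
    proof -
      have ej: "e j = c * Z ^ j" by (simp add: e_def c_def)
      have ej': "e' j = c * q ^ j * Z ^ j" by (simp add: e'_def c_def power_mult_distrib)
      show ?thesis unfolding ej ej' by (simp add: algebra_simps)
    qed
    finally show ?thesis .
  qed
  have s: "summable (\<lambda>j. e j - e' j)" using se se' by (rule summable_diff)
  have "(\<Sum>j. e j - e' j) = (\<Sum>j. e (Suc j) - e' (Suc j)) + (e 0 - e' 0)"
    using suminf_split_head[OF s] by simp
  also have "e 0 - e' 0 = 0" by (simp add: e_def e'_def)
  also have "(\<Sum>j. e (Suc j) - e' (Suc j)) = (\<Sum>j. Z * (e j - g * e' j))" by (simp add: step)
  also have "\<dots> = Z * (\<Sum>j. e j - g * e' j)"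
    by (rule suminf_mult) (intro summable_diff summable_mult se se')
  also have "(\<Sum>j. e j - g * e' j) = suminf e - g * suminf e'"
    using suminf_diff[OF se summable_mult[OF se', of g]] suminf_mult[OF se', of g] by simp
  finally have "suminf e - suminf e' = Z * (suminf e - g * suminf e')"
    using se se' by (simp add: suminf_diff)
  moreover have "qE q g Z = suminf e" "qE q g (q * Z) = suminf e'"
    by (simp_all add: qE_def e_def e'_def)
  ultimately show ?thesis by (simp add: algebra_simps)
qed

lemma fe_iter:
  assumes fe: "\<And>W. norm W < 1 \<Longrightarrow> (1 - W) * \<Phi> W = (1 - g * W) * \<Phi> (q * W)"
    and q: "norm (q::complex) < 1" and Z: "norm Z < 1"
  shows "\<Phi> Z * qpoch Z q k = qpoch (g * Z) q k * \<Phi> (q ^ k * Z)"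
proof (induction k)
  case (Suc k)
  have "(1 - q ^ k * Z) * \<Phi> (q ^ k * Z) = (1 - g * (q ^ k * Z)) * \<Phi> (q * (q ^ k * Z))"
    by (rule fe[OF norm_qZ[OF q Z]])
  have "\<Phi> Z * qpoch Z q (Suc k) = (\<Phi> Z * qpoch Z q k) * (1 - q ^ k * Z)"
    by (simp add: qpoch_Suc mult.commute mult.left_commute)
  also have "\<dots> = qpoch (g * Z) q k * ((1 - q ^ k * Z) * \<Phi> (q ^ k * Z))"
    using Suc by simp
  also have "\<dots> = qpoch (g * Z) q k * ((1 - g * (q ^ k * Z)) * \<Phi> (q * (q ^ k * Z)))"
    by (simp only: fe[OF norm_qZ[OF q Z]])
  also have "\<dots> = qpoch (g * Z) q (Suc k) * \<Phi> (q ^ Suc k * Z)"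
    by (simp add: qpoch_Suc mult.commute mult.left_commute)
  finally show ?case .
qed simp

lemma qE_lim:
  assumes q: "norm q < 1" and Z: "norm Z < 1"
  shows "(\<lambda>k. qE q g (q ^ k * Z)) \<longlonglongrightarrow> 1"
proof -
  let ?c = "\<lambda>j. qpoch g q j / qpoch q q j"
  have "summable (\<lambda>j. ?c j * (1/2) ^ j)"
    by (rule summable_norm_cancel[OF qE_summable[OF q]]) simp
  hence ic: "isCont (\<lambda>x. \<Sum>n. ?c n * x ^ n) 0"
    by (rule isCont_powser) simp
  have "(\<lambda>k. q ^ k * Z) \<longlonglongrightarrow> 0 * Z" by (intro tendsto_intros qpow_lim0 q)
  hence "(\<lambda>k. \<Sum>n. ?c n * (q ^ k * Z) ^ n) \<longlonglongrightarrow> (\<Sum>n. ?c n * 0 ^ n)"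
    using isCont_tendsto_compose[OF ic] by simp
  moreover have "(\<Sum>n. ?c n * 0 ^ n) = 1" by (simp only: powser_zero) simp
  ultimately show ?thesis by (simp only: qE_def)
qed

definition qv :: "complex \<Rightarrow> complex \<Rightarrow> complex \<Rightarrow> nat \<Rightarrow> complex" where
  "qv q g Z n = qpoch (g * q) q n * qpoch (g * Z) q n / (qpoch q q n * qpoch Z q n)
     * Z ^ n * q ^ (n * (n - 1)) * (1 - g * Z * q ^ (2 * n))"

definition qD :: "complex \<Rightarrow> complex \<Rightarrow> complex \<Rightarrow> complex" where
  "qD q g Z = (\<Sum>n. qv q g Z n)"

definition qM :: "complex \<Rightarrow> complex \<Rightarrow> real \<Rightarrow> nat \<Rightarrow> real" where
  "qM q g \<rho> n = norm (qpoch (g * q) q n / qpoch q q n) * (\<rho> * (1 + norm g) / (1 - \<rho>)) ^ n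
     * norm q ^ (n * (n - 1)) * (1 + norm g)"

lemma exp_Suc: "Suc n * (Suc n - 1) = n * (n - 1) + 2 * n"
  by (cases n) (auto simp: algebra_simps)

lemma qM_nonneg: "\<rho> < 1 \<Longrightarrow> 0 \<le> \<rho> \<Longrightarrow> 0 \<le> qM q g \<rho> n"
  unfolding qM_def by (intro mult_nonneg_nonneg) auto

lemma qM_summable:
  assumes q: "norm q < 1" and r: "0 \<le> \<rho>" "\<rho> < 1"
  shows "summable (qM q g \<rho>)"
proof -
  define K where "K = \<rho> * (1 + norm g) / (1 - \<rho>)"
  have "summable (\<lambda>n. norm (qM q g \<rho> n))"
  proof (rule ratio_summable)
    fix n
    have nz: "1 - q * q ^ n \<noteq> 0" by (rule one_minus_qq_nz[OF q])
    have e: "norm q ^ (Suc n * (Suc n - 1)) = norm q ^ (n * (n - 1)) * (norm q ^ 2) ^ n"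
      by (simp only: exp_Suc power_add power_mult)
    have f: "norm (qpoch (g * q) q (Suc n) / qpoch q q (Suc n)) =
             norm (1 - g * q * q ^ n) / norm (1 - q * q ^ n) * norm (qpoch (g * q) q n / qpoch q q n)"
      by (simp add: qpoch_Suc norm_mult norm_divide ac_simps)
    show "qM q g \<rho> (Suc n) = (norm (1 - g * q * q ^ n) / norm (1 - q * q ^ n) * K * (norm q ^ 2) ^ n) * qM q g \<rho> n"
      unfolding qM_def f e K_def[symmetric] by (simp add: ac_simps)
  next
    have "(\<lambda>n. norm (1 - g * q * q ^ n) / norm (1 - q * q ^ n) * K * (norm q ^ 2) ^ n)
          \<longlonglongrightarrow> norm (1 - g * q * 0) / norm (1 - q * 0) * K * 0"
      using q by (intro tendsto_intros qpow_lim0 LIMSEQ_power_zero) (auto simp: power_less_one_iff abs_square_less_1)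
    thus "(\<lambda>n. norm (1 - g * q * q ^ n) / norm (1 - q * q ^ n) * K * (norm q ^ 2) ^ n) \<longlonglongrightarrow> 0"
      by simp
  qed simp
  thus ?thesis using qM_nonneg[OF r(2,1)] by simp
qed

lemma qv_bound:
  assumes q: "norm q < 1" and W: "norm W \<le> \<rho>" and r: "\<rho> < 1"
  shows "norm (qv q g W n) \<le> qM q g \<rho> n"
proof -
  have r0: "0 \<le> \<rho>" using W norm_ge_zero order_trans by blast
  have W1: "norm W < 1" using W r by simp
  have b1: "norm (qpoch (g * W) q n) \<le> (1 + norm g) ^ n"
  proof -
    have "norm (qpoch (g * W) q n) \<le> (1 + norm (g * W)) ^ n" using q by (intro qpoch_norm_le) simp
    also have "norm (g * W) \<le> norm g" using W1 by (simp add: norm_mult mult_left_le)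
    hence "(1 + norm (g * W)) ^ n \<le> (1 + norm g) ^ n" by (intro power_mono) auto
    finally show ?thesis .
  qed
  have b2: "(1 - \<rho>) ^ n \<le> norm (qpoch W q n)"
  proof -
    have "(1 - \<rho>) ^ n \<le> (1 - norm W) ^ n" using W r by (intro power_mono) auto
    also have "\<dots> \<le> norm (qpoch W q n)" using q W1 by (intro qpoch_norm_ge) auto
    finally show ?thesis .
  qed
  have pos: "0 < (1 - \<rho>) ^ n" using r by simp
  have b12: "norm (qpoch (g * W) q n) / norm (qpoch W q n) \<le> (1 + norm g) ^ n / (1 - \<rho>) ^ n"
    by (rule frac_le[OF _ b1 pos b2]) simp
  have b3: "norm W ^ n \<le> \<rho> ^ n" using W by (intro power_mono) auto
  have b4: "norm (1 - g * W * q ^ (2 * n)) \<le> 1 + norm g"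
  proof -
    have "norm W * norm q ^ (2 * n) \<le> 1"
      using W1 q by (intro mult_le_one power_le_one) auto
    hence "norm g * (norm W * norm q ^ (2 * n)) \<le> norm g"
      by (intro mult_left_le) auto
    hence "norm (g * W * q ^ (2 * n)) \<le> norm g" by (simp add: norm_mult norm_power mult.assoc)
    thus ?thesis using norm_1_minus_le[of "g * W * q ^ (2 * n)"] by simp
  qed
  define X where "X = norm (qpoch (g * q) q n / qpoch q q n)"
  define Y where "Y = norm q ^ (n * (n - 1))"
  have "norm (qv q g W n) = X * (norm (qpoch (g * W) q n) / norm (qpoch W q n)) * norm W ^ n * Y
          * norm (1 - g * W * q ^ (2 * n))"
    by (simp add: qv_def X_def Y_def norm_mult norm_divide norm_power)
  also have "\<dots> \<le> X * ((1 + norm g) ^ n / (1 - \<rho>) ^ n) * \<rho> ^ n * Y * (1 + norm g)"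
    using r by (intro mult_mono b12 b3 b4 mult_nonneg_nonneg) (auto simp: X_def Y_def r0)
  also have "\<dots> = qM q g \<rho> n"
    by (simp add: qM_def X_def Y_def power_divide power_mult_distrib)
  finally show ?thesis .
qed

lemma qv_summable:
  assumes q: "norm q < 1" and Z: "norm Z < 1"
  shows "summable (\<lambda>n. norm (qv q g Z n))"
  by (rule summable_comparison_test[OF _ qM_summable[OF q _ Z, of g]])
     (use qv_bound[OF q _ Z] in auto)

lemma qpoch_zero_arg [simp]: "qpoch 0 q n = 1" by (simp add: qpoch_def)

lemma qpoch_tendsto: "(f \<longlongrightarrow> a) F \<Longrightarrow> ((\<lambda>k. qpoch (f k) q n) \<longlongrightarrow> qpoch a q n) F"
  unfolding qpoch_def by (intro tendsto_intros)

lemma qv_zero: "qv q g 0 n = (if n = 0 then 1 else 0)"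
  by (cases n) (simp_all add: qv_def)

lemma qD_lim:
  assumes q: "norm q < 1" and Z: "norm Z < 1"
  shows "(\<lambda>k. qD q g (q ^ k * Z)) \<longlonglongrightarrow> 1"
proof -
  have W0: "(\<lambda>k. q ^ k * Z) \<longlonglongrightarrow> 0" using tendsto_mult[OF qpow_lim0[OF q] tendsto_const[of Z]] by simp
  have lim: "(\<lambda>k. qv q g (q ^ k * Z) n) \<longlonglongrightarrow> qv q g 0 n" for n
    unfolding qv_def
    by (intro tendsto_intros qpoch_tendsto W0) (simp add: qpoch_qq_nz[OF q])
  have bnd: "norm (q ^ k * Z) \<le> norm Z" for k
    using q by (simp add: norm_mult norm_power mult_left_le_one_le power_le_one)
  have "((\<lambda>k. \<Sum>n. qv q g (q ^ k * Z) n) \<longlonglongrightarrow> (\<Sum>n. qv q g 0 n))"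
    using tannerys_theorem[of "\<lambda>n k. qv q g (q ^ k * Z) n" "\<lambda>n. qv q g 0 n" sequentially "qM q g (norm Z)"]
      lim qv_bound[OF q bnd Z] qM_summable[OF q _ Z, of g]
    by (auto intro: always_eventually)
  moreover have "(\<Sum>n. qv q g 0 n) = 1"
    using sums_single[of 0 "\<lambda>_. 1::complex"] by (simp add: qv_zero sums_iff)
  ultimately show ?thesis by (simp add: qD_def)
qed

lemma tel_poly:
  fixes P q g Z :: complex
  shows "(1 - g*Z*(q^2*P^2))*(1-Z*q*P) - q*P*(1-g*Z*q*P)*(1 - g*(q*Z)*(q^2*P^2))
       = -(1-g*q^2*P)*(1-g*Z*q*P)*Z*(q^2*P^2) + (1-q*P)*(1-Z*q*P)"
  by (simp add: algebra_simps power2_eq_square)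
lemma tel_alg:
  fixes K P q g Z :: complex
  assumes u: "1 - q*P \<noteq> 0" and w: "1 - Z*q*P \<noteq> 0"
  shows "K*(1-g*q*P)*(1-g*Z)/(1-q*P) * Z * (1 - g*Z*(q^2*P^2))
       - (1-g*Z) * (K*(1-g*q*P)*(1-g*Z*q*P)/((1-q*P)*(1-Z*q*P)) * (q*P*Z) * (1 - g*(q*Z)*(q^2*P^2)))
       = -(1-g*Z)*(1-g*q^2*P) * (K*(1-g*q*P)*(1-g*Z*q*P)/((1-q*P)*(1-Z*q*P)) * Z^2 * (q^2*P^2))
         + (1-g*Z)*(1-g*q*P)*(K*Z)"
proof -
  define U where "U = 1 - q*P"
  define W where "W = 1 - Z*q*P"
  define T1 where "T1 = 1 - g*Z*(q^2*P^2)"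
  define T2 where "T2 = 1 - g*(q*Z)*(q^2*P^2)"
  define T3 where "T3 = 1-g*q^2*P"
  define V where "V = 1-g*Z*q*P"
  define A where "A = K*(1-g*q*P)*(1-g*Z)"
  have u': "U \<noteq> 0" and w': "W \<noteq> 0" using u w by (simp_all add: U_def W_def)
  define X where "X = A*Z/(U*W)"
  have e1: "A/U * Z * T1 = X * (W * T1)"
    using u' w' by (simp add: X_def field_simps)
  have e2: "(1-g*Z) * (K*(1-g*q*P)*V/(U*W) * (q*P*Z) * T2) = X * (q*P*V*T2)"
    using u' w' by (simp add: X_def A_def field_simps)
  have e3: "-(1-g*Z)*T3 * (K*(1-g*q*P)*V/(U*W) * Z^2 * (q^2*P^2)) = X * (-T3*V*Z*(q^2*P^2))"
    using u' w' by (simp add: X_def A_def field_simps power2_eq_square)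
  have e4: "(1-g*Z)*(1-g*q*P)*(K*Z) = X * (U*W)"
    using u' w' by (simp add: X_def A_def field_simps)
  have p: "W * T1 - q*P*V*T2 = -T3*V*Z*(q^2*P^2) + U*W"
    unfolding T1_def T2_def T3_def U_def W_def V_def using tel_poly[of g Z q P] by (simp add: mult.commute)
  have "X * (W * T1) - X * (q*P*V*T2) = X * (-T3*V*Z*(q^2*P^2)) + X * (U*W)"
    using p by (simp add: right_diff_distrib[symmetric] distrib_left[symmetric])
  thus ?thesis unfolding U_def[symmetric] W_def[symmetric] T1_def[symmetric] T2_def[symmetric]
      T3_def[symmetric] V_def[symmetric] A_def[symmetric] e1 e2 e3 e4 .
qed

definition qW :: "complex \<Rightarrow> complex \<Rightarrow> complex \<Rightarrow> nat \<Rightarrow> complex" where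
  "qW q g Z N = qpoch (g * q) q N * qpoch (g * Z * q) q N / (qpoch q q N * qpoch (Z * q) q N)
     * Z ^ (N + 1) * q ^ ((N + 1) * N)"

lemma qW_Suc:
  assumes q: "norm q < 1" and Z: "norm Z < 1"
  shows "qW q g Z (Suc N) = ((1 - g*q*q^N) * (1 - g*Z*q*q^N) / ((1 - q*q^N) * (1 - Z*q*q^N))
            * Z * (q^2 * (q^N)^2)) * qW q g Z N"
proof -
  have Zq: "norm (Z * q) < 1" using norm_qZ[OF q Z, of 1] by (simp add: mult.commute)
  have n1: "1 - q * q ^ N \<noteq> 0" by (rule one_minus_qq_nz[OF q])
  have n2: "1 - Z * q * q ^ N \<noteq> 0" using qpoch_nz[of q "Z*q" "Suc N"] q Zq by (simp add: qpoch_Suc)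
  have n3: "qpoch q q N \<noteq> 0" by (rule qpoch_qq_nz[OF q])
  have n4: "qpoch (Z * q) q N \<noteq> 0" using qpoch_nz[of q "Z*q" N] q Zq by simp
  have e: "q ^ ((Suc N + 1) * Suc N) = q ^ ((N + 1) * N) * (q^2 * (q^N)^2)"
  proof -
    have "(Suc N + 1) * Suc N = (N + 1) * N + (2 + N * 2)" by (simp add: algebra_simps)
    thus ?thesis by (simp only: power_add power_mult)
  qed
  show ?thesis
    unfolding qW_def qpoch_Suc e using n1 n2 n3 n4
    by (simp add: field_simps)
qed

lemma cancel_aux: "(v::complex) \<noteq> 0 \<Longrightarrow> v * (X / (U * v) * Y * T) = X / U * Y * T"
  by (cases "U = 0") (simp_all add: field_simps)

lemma tel:
  assumes q: "norm q < 1" and Z: "norm Z < 1"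
  shows "(\<Sum>n\<le>N. (1 - Z) * qv q g Z n - (1 - g * Z) * qv q g (q * Z) n)
          = -(1 - g * Z) * (1 - g * q ^ (N + 1)) * qW q g Z N"
proof (induction N)
  case 0
  show ?case by (simp add: qv_def qW_def algebra_simps)
next
  case (Suc N)
  have Zq: "norm (Z * q) < 1" using norm_qZ[OF q Z, of 1] by (simp add: mult.commute)
  have n1: "1 - q * q ^ N \<noteq> 0" by (rule one_minus_qq_nz[OF q])
  have n2: "1 - Z * q * q ^ N \<noteq> 0" using qpoch_nz[of q "Z*q" "Suc N"] q Zq by (simp add: qpoch_Suc)
  have n3: "qpoch q q N \<noteq> 0" by (rule qpoch_qq_nz[OF q])
  have n4: "qpoch (Z * q) q N \<noteq> 0" using qpoch_nz[of q "Z*q" N] q Zq by simp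
  have n5: "1 - Z \<noteq> 0" using Z by auto
  define K where "K = qpoch (g * q) q N * qpoch (g * Z * q) q N / (qpoch q q N * qpoch (Z * q) q N) * Z ^ N * q ^ ((N + 1) * N)"
  have e1: "q ^ (Suc N * (Suc N - 1)) = q ^ ((N + 1) * N)" by simp
  have e2: "q ^ (2 * Suc N) = q^2 * (q^N)^2"
  proof -
    have "2 * Suc N = 2 + N * 2" by simp
    thus ?thesis by (simp only: power_add power_mult)
  qed
  have h1: "qv q g Z (Suc N) = K*(1-g*q*q^N)*(1-g*Z)/((1-q*q^N)*(1-Z)) * Z * (1 - g*Z*(q^2*(q^N)^2))"
    unfolding qv_def qpoch_Suc[of "g*q"] qpoch_Suc'[of "g*Z"] qpoch_Suc[of q q] qpoch_Suc'[of Z] e1 e2 K_def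
    using n1 n3 n4 n5 by (simp add: field_simps)
  have h1': "(1 - Z) * qv q g Z (Suc N) = K*(1-g*q*q^N)*(1-g*Z)/(1-q*q^N) * Z * (1 - g*Z*(q^2*(q^N)^2))"
    unfolding h1 by (rule cancel_aux[OF n5])
  have h2: "qv q g (q * Z) (Suc N) = K*(1-g*q*q^N)*(1-g*Z*q*q^N)/((1-q*q^N)*(1-Z*q*q^N)) * (q*q^N*Z) * (1 - g*(q*Z)*(q^2*(q^N)^2))"
  proof -
    have a: "g * (Z * q) = g * Z * q" "q * Z = Z * q" by (simp_all add: ac_simps)
    have b: "(Z * q) ^ Suc N = q * q ^ N * Z * Z ^ N" by (simp add: power_mult_distrib ac_simps)
    show ?thesis
      unfolding qv_def a(2) unfolding a(1) unfolding qpoch_Suc[of "g*q"] qpoch_Suc[of "g*Z*q"] qpoch_Suc[of q q] qpoch_Suc[of "Z*q"] e1 e2 K_def b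
      using n1 n2 n3 n4 by (simp add: field_simps)
  qed
  have h3: "qW q g Z N = K * Z" by (simp add: qW_def K_def)
  have h4: "qW q g Z (Suc N) = K*(1-g*q*q^N)*(1-g*Z*q*q^N)/((1-q*q^N)*(1-Z*q*q^N)) * Z^2 * (q^2*(q^N)^2)"
    unfolding qW_Suc[OF q Z] h3 using n1 n2 by (simp add: field_simps power2_eq_square)
  have "(\<Sum>n\<le>Suc N. (1 - Z) * qv q g Z n - (1 - g * Z) * qv q g (q * Z) n)
        = -(1 - g * Z) * (1 - g * q ^ (N + 1)) * qW q g Z N
          + ((1 - Z) * qv q g Z (Suc N) - (1 - g * Z) * qv q g (q * Z) (Suc N))"
    using Suc.IH by simp
  also have "\<dots> = -(1-g*Z)*(1-g*q^2*q^N) * qW q g Z (Suc N)"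
    unfolding h1' h2 h3 h4 using tel_alg[OF n1 n2[unfolded mult.assoc[symmetric]], of K g]
    by (simp add: algebra_simps)
  finally show ?case by (simp add: power_add power2_eq_square mult.assoc)
qed

lemma qW_lim0:
  assumes q: "norm q < 1" and Z: "norm Z < 1"
  shows "qW q g Z \<longlonglongrightarrow> 0"
proof -
  have "summable (\<lambda>N. norm (qW q g Z N))"
  proof (rule ratio_summable[where f="qW q g Z", OF qW_Suc[OF q Z]])
    have "(\<lambda>N. (1 - g*q*q^N) * (1 - g*Z*q*q^N) / ((1 - q*q^N) * (1 - Z*q*q^N)) * Z * (q^2 * (q^N)^2))
          \<longlonglongrightarrow> (1 - g*q*0) * (1 - g*Z*q*0) / ((1 - q*0) * (1 - Z*q*0)) * Z * (q^2 * 0^2)"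
      by (intro tendsto_intros qpow_lim0 q) simp_all
    thus "(\<lambda>N. (1 - g*q*q^N) * (1 - g*Z*q*q^N) / ((1 - q*q^N) * (1 - Z*q*q^N)) * Z * (q^2 * (q^N)^2))
          \<longlonglongrightarrow> 0" by simp
  qed simp
  hence "(\<lambda>N. norm (qW q g Z N)) \<longlonglongrightarrow> 0" by (rule summable_LIMSEQ_zero)
  thus ?thesis by (rule tendsto_norm_zero_cancel)
qed

lemma qD_fe:
  assumes q: "norm q < 1" and Z: "norm Z < 1"
  shows "(1 - Z) * qD q g Z = (1 - g * Z) * qD q g (q * Z)"
proof -
  have qZ: "norm (q * Z) < 1" using norm_qZ[OF q Z, of 1] by simp
  have s1: "(\<lambda>n. qv q g Z n) sums qD q g Z"
    unfolding qD_def by (intro summable_sums summable_norm_cancel[OF qv_summable[OF q Z]])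
  have s2: "(\<lambda>n. qv q g (q * Z) n) sums qD q g (q * Z)"
    unfolding qD_def by (intro summable_sums summable_norm_cancel[OF qv_summable[OF q qZ]])
  have "(\<lambda>n. (1 - Z) * qv q g Z n - (1 - g * Z) * qv q g (q * Z) n) sums
        ((1 - Z) * qD q g Z - (1 - g * Z) * qD q g (q * Z))"
    by (intro sums_diff sums_mult s1 s2)
  hence l1: "(\<lambda>N. \<Sum>n\<le>N. (1 - Z) * qv q g Z n - (1 - g * Z) * qv q g (q * Z) n) \<longlonglongrightarrow>
        ((1 - Z) * qD q g Z - (1 - g * Z) * qD q g (q * Z))"
    by (simp add: sums_def_le)
  have "(\<lambda>N. -(1 - g * Z) * (1 - g * (q * q ^ N)) * qW q g Z N) \<longlonglongrightarrow> -(1 - g * Z) * (1 - g * (q * 0)) * 0"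
    by (intro tendsto_intros qpow_lim0 qW_lim0 q Z)
  hence l2: "(\<lambda>N. \<Sum>n\<le>N. (1 - Z) * qv q g Z n - (1 - g * Z) * qv q g (q * Z) n) \<longlonglongrightarrow> 0"
    unfolding tel[OF q Z] by simp
  from LIMSEQ_unique[OF l1 l2] show ?thesis by simp
qed

lemma qD_eq_qE:
  assumes q: "norm q < 1" and Z: "norm Z < 1"
  shows "qD q g Z = qE q g Z"
proof -
  have fD: "\<And>W. norm W < 1 \<Longrightarrow> (1 - W) * qD q g W = (1 - g * W) * qD q g (q * W)"
    using qD_fe[OF q] by blast
  have fE: "\<And>W. norm W < 1 \<Longrightarrow> (1 - W) * qE q g W = (1 - g * W) * qE q g (q * W)"
    using qE_fe[OF q] by blast
  have eq: "qD q g Z * qE q g (q ^ k * Z) = qE q g Z * qD q g (q ^ k * Z)" for k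
  proof -
    have nz: "qpoch Z q k \<noteq> 0" using qpoch_nz[of q Z k] q Z by simp
    have "qD q g Z * qE q g (q ^ k * Z) * qpoch Z q k = qpoch (g * Z) q k * qD q g (q ^ k * Z) * qE q g (q ^ k * Z)"
      using fe_iter[of "qD q g" g q Z k, OF fD q Z] by (simp add: ac_simps)
    also have "\<dots> = qE q g Z * qD q g (q ^ k * Z) * qpoch Z q k"
      using fe_iter[of "qE q g" g q Z k, OF fE q Z] by (simp add: ac_simps)
    finally show ?thesis using nz by simp
  qed
  have "(\<lambda>k. qD q g Z * qE q g (q ^ k * Z)) \<longlonglongrightarrow> qD q g Z * 1"
    by (intro tendsto_intros qE_lim q Z)
  moreover have "(\<lambda>k. qD q g Z * qE q g (q ^ k * Z)) \<longlonglongrightarrow> qE q g Z * 1"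
    unfolding eq by (intro tendsto_intros qD_lim q Z)
  ultimately show ?thesis using LIMSEQ_unique by fastforce
qed

lemma saal_base_poly:
  fixes A B C u :: complex
  assumes "A \<noteq> 0" "B \<noteq> 0" "C \<noteq> 0"
  shows "(1 - C*u) * (1 - A*B/C*u) - (1 - A*u) * (1 - B*u) = -u * (1 - C/A) * (1 - C/B) * (A*B/C)"
  using assms by (simp add: field_simps)

lemma saal_step_poly:
  fixes A B C q u t :: complex
  assumes "A \<noteq> 0" "B \<noteq> 0" "C \<noteq> 0"
  shows "-(q*u) * (1 - q*t) * (1 - C*t) * (1 - A*B/C*u)
         + (1 - q*(u*(q*t))) * (1 - C*(u*(q*t))) * (1 - A*B/C*u)
         - (1 - A*(u*(q*t))) * (1 - B*(u*(q*t))) * (1 - q*u)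
       = -u * (1 - C/A*(q*t)) * (1 - C/B*(q*t)) * (A*B/C) * (1 - q*u)"
  using assms by (simp add: field_simps)

definition sP :: "complex \<Rightarrow> complex \<Rightarrow> nat \<Rightarrow> complex" where
  "sP q g j = qpoch g q j / qpoch q q j"

definition sQ :: "complex \<Rightarrow> complex \<Rightarrow> complex \<Rightarrow> complex \<Rightarrow> nat \<Rightarrow> complex" where
  "sQ q A B C k = qpoch (C/A) q k * qpoch (C/B) q k / (qpoch q q k * qpoch C q k) * (A*B/C) ^ k"

lemma sP_Suc: "norm q < 1 \<Longrightarrow> sP q g (Suc j) * (1 - q*q^j) = sP q g j * (1 - g*q^j)"
  using one_minus_qq_nz[of q j] qpoch_qq_nz[of q j] by (simp add: sP_def qpoch_Suc field_simps)

lemma sQ_Suc: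
  assumes q: "norm q < 1" and Cn: "\<And>n. qpoch C q n \<noteq> 0" and AB: "A \<noteq> 0" "B \<noteq> 0"
  shows "sQ q A B C (Suc k) * (1 - q*q^k) * (1 - C*q^k) = sQ q A B C k * (1 - C/A*q^k) * (1 - C/B*q^k) * (A*B/C)"
proof -
  have n1: "1 - q*q^k \<noteq> 0" by (rule one_minus_qq_nz[OF q])
  have n2: "qpoch q q k \<noteq> 0" by (rule qpoch_qq_nz[OF q])
  have n3: "qpoch C q k \<noteq> 0" by (rule Cn)
  have n4: "1 - C*q^k \<noteq> 0" using Cn[of "Suc k"] by (simp add: qpoch_Suc)
  define x where "x = qpoch (C/A) q k"
  define y where "y = qpoch (C/B) q k"
  define d1 where "d1 = qpoch q q k"
  define d2 where "d2 = qpoch C q k"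
  define G where "G = A*B/C"
  define a1 where "a1 = 1 - C/A*q^k"
  define b1 where "b1 = 1 - C/B*q^k"
  define e where "e = 1 - q*q^k"
  define f where "f = 1 - C*q^k"
  have "sQ q A B C (Suc k) = x*a1*(y*b1)/(d1*e*(d2*f))*(G*G^k)"
    unfolding sQ_def qpoch_Suc power_Suc x_def y_def d1_def d2_def G_def a1_def b1_def e_def f_def ..
  moreover have "sQ q A B C k = x*y/(d1*d2)*G^k"
    unfolding sQ_def x_def y_def d1_def d2_def G_def ..
  moreover have "x*a1*(y*b1)/(d1*e*(d2*f))*(G*G^k) * e * f = x*y/(d1*d2)*G^k * a1 * b1 * G"
    using n1 n2 n3 n4 unfolding d1_def[symmetric] d2_def[symmetric] e_def[symmetric] f_def[symmetric]
    by (simp add: field_simps)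
  ultimately show ?thesis unfolding a1_def b1_def e_def f_def G_def by simp
qed

lemma saal_partial:
  assumes q: "norm q < 1" and Cn: "\<And>n. qpoch C q n \<noteq> 0"
    and nz: "A \<noteq> 0" "B \<noteq> 0" "C \<noteq> 0"
  shows "M \<le> N \<Longrightarrow> (\<Sum>k\<le>M. ((1-q*q^N)*(1-C*q^N)* sP q (A*B/C) (Suc N - k)
              - (1-A*q^N)*(1-B*q^N)* sP q (A*B/C) (N-k)) * sQ q A B C k)
         = -(q^(N-M)) * sP q (A*B/C) (N-M) * sQ q A B C M * (1 - C/A*q^M) * (1 - C/B*q^M) * (A*B/C)"
proof (induction M)
  case 0
  define u where "u = q^N"
  have F1: "sP q (A*B/C) (Suc N) * (1 - q*u) = sP q (A*B/C) N * (1 - A*B/C*u)"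
    unfolding u_def by (rule sP_Suc[OF q])
  have "((1-q*u)*(1-C*u)* sP q (A*B/C) (Suc N) - (1-A*u)*(1-B*u)* sP q (A*B/C) N)
        = (1-C*u)*(sP q (A*B/C) (Suc N) * (1 - q*u)) - (1-A*u)*(1-B*u)* sP q (A*B/C) N"
    by (simp add: algebra_simps)
  also have "\<dots> = sP q (A*B/C) N * ((1 - C*u) * (1 - A*B/C*u) - (1 - A*u) * (1 - B*u))"
    unfolding F1 by (simp add: algebra_simps)
  also have "\<dots> = sP q (A*B/C) N * (-u * (1 - C/A) * (1 - C/B) * (A*B/C))"
    by (simp only: saal_base_poly[OF nz])
  finally show ?case by (simp add: u_def sQ_def algebra_simps)
next
  case (Suc M)
  define m where "m = N - Suc M"
  have N: "N = m + Suc M" using Suc.prems by (simp add: m_def)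
  define u where "u = q^m"
  define t where "t = q^M"
  define g where "g = A*B/C"
  define p0 where "p0 = sP q g m"
  define p1 where "p1 = sP q g (Suc m)"
  define r0 where "r0 = sQ q A B C M"
  define r1 where "r1 = sQ q A B C (Suc M)"
  have qN: "q^N = u*(q*t)" by (simp add: N u_def t_def power_add)
  have i1: "Suc N - Suc M = Suc m" "N - Suc M = m" "N - M = Suc m" using N by auto
  have F1: "p1 * (1 - q*u) = p0 * (1 - g*u)" unfolding p0_def p1_def u_def by (rule sP_Suc[OF q])
  have F2: "r0 * (1 - C/A*t) * (1 - C/B*t) * g = r1 * (1 - q*t) * (1 - C*t)"
    unfolding r0_def r1_def t_def g_def by (rule sQ_Suc[OF q Cn nz(1,2), symmetric])
  have nu: "1 - q*u \<noteq> 0" unfolding u_def by (rule one_minus_qq_nz[OF q])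
  define X1 where "X1 = (1 - q*(u*(q*t))) * (1 - C*(u*(q*t)))"
  define X2 where "X2 = (1 - A*(u*(q*t))) * (1 - B*(u*(q*t)))"
  have IH: "(\<Sum>k\<le>M. ((1-q*q^N)*(1-C*q^N)* sP q (A*B/C) (Suc N - k)
              - (1-A*q^N)*(1-B*q^N)* sP q (A*B/C) (N-k)) * sQ q A B C k)
         = -(q*u) * p1 * (r0 * (1 - C/A*t) * (1 - C/B*t) * g)"
  proof -
    have "M \<le> N" using Suc.prems by simp
    hence "(\<Sum>k\<le>M. ((1-q*q^N)*(1-C*q^N)* sP q (A*B/C) (Suc N - k)
              - (1-A*q^N)*(1-B*q^N)* sP q (A*B/C) (N-k)) * sQ q A B C k)
         = -(q^(N-M)) * sP q (A*B/C) (N-M) * sQ q A B C M * (1 - C/A*q^M) * (1 - C/B*q^M) * (A*B/C)"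
      by (rule Suc.IH)
    also have "\<dots> = -(q*u) * p1 * (r0 * (1 - C/A*t) * (1 - C/B*t) * g)"
      unfolding i1(3) by (simp add: p1_def r0_def u_def t_def g_def ac_simps)
    finally show ?thesis .
  qed
  have T: "((1-q*q^N)*(1-C*q^N)* sP q (A*B/C) (Suc N - Suc M)
              - (1-A*q^N)*(1-B*q^N)* sP q (A*B/C) (N - Suc M)) * sQ q A B C (Suc M)
          = (X1 * p1 - X2 * p0) * r1"
    by (simp add: i1 qN X1_def X2_def p0_def p1_def r1_def g_def)
  have "(-(q*u) * p1 * (r1 * (1 - q*t) * (1 - C*t)) + (X1 * p1 - X2 * p0) * r1) * (1 - q*u)
        = r1 * (-(q*u) * (1 - q*t) * (1 - C*t) * (p1 * (1 - q*u)) + X1 * (p1 * (1 - q*u)) - X2 * p0 * (1 - q*u))"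
    by (simp add: algebra_simps)
  also have "\<dots> = r1 * p0 * (-(q*u) * (1 - q*t) * (1 - C*t) * (1 - g*u) + X1 * (1 - g*u) - X2 * (1 - q*u))"
    unfolding F1 by (simp add: algebra_simps)
  also have "-(q*u) * (1 - q*t) * (1 - C*t) * (1 - g*u) + X1 * (1 - g*u) - X2 * (1 - q*u)
       = -u * (1 - C/A*(q*t)) * (1 - C/B*(q*t)) * g * (1 - q*u)"
    unfolding X1_def X2_def g_def by (rule saal_step_poly[OF nz])
  finally have "(-(q*u) * p1 * (r1 * (1 - q*t) * (1 - C*t)) + (X1 * p1 - X2 * p0) * r1) * (1 - q*u)
        = (-u * p0 * r1 * (1 - C/A*(q*t)) * (1 - C/B*(q*t)) * g) * (1 - q*u)"
    by (simp add: algebra_simps)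
  hence key: "-(q*u) * p1 * (r1 * (1 - q*t) * (1 - C*t)) + (X1 * p1 - X2 * p0) * r1
        = -u * p0 * r1 * (1 - C/A*(q*t)) * (1 - C/B*(q*t)) * g"
    using mult_right_cancel[OF nu] by blast
  have "(\<Sum>k\<le>Suc M. ((1-q*q^N)*(1-C*q^N)* sP q (A*B/C) (Suc N - k)
              - (1-A*q^N)*(1-B*q^N)* sP q (A*B/C) (N-k)) * sQ q A B C k)
        = -(q*u) * p1 * (r0 * (1 - C/A*t) * (1 - C/B*t) * g) + (X1 * p1 - X2 * p0) * r1"
    by (simp only: sum.atMost_Suc IH T)
  also have "\<dots> = -(q*u) * p1 * (r1 * (1 - q*t) * (1 - C*t)) + (X1 * p1 - X2 * p0) * r1"
    by (simp only: F2)
  also have "\<dots> = -u * p0 * r1 * (1 - C/A*(q*t)) * (1 - C/B*(q*t)) * g" by (rule key)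
  also have "\<dots> = -(q^(N - Suc M)) * sP q (A*B/C) (N - Suc M) * sQ q A B C (Suc M)
       * (1 - C/A*q^Suc M) * (1 - C/B*q^Suc M) * (A*B/C)"
    by (simp add: i1 u_def t_def p0_def r1_def g_def ac_simps)
  finally show ?case .
qed

definition sh :: "complex \<Rightarrow> complex \<Rightarrow> complex \<Rightarrow> complex \<Rightarrow> nat \<Rightarrow> complex" where
  "sh q A B C N = (\<Sum>k\<le>N. sP q (A*B/C) (N-k) * sQ q A B C k)"

lemma sh_rec:
  assumes q: "norm q < 1" and Cn: "\<And>n. qpoch C q n \<noteq> 0"
    and nz: "A \<noteq> 0" "B \<noteq> 0" "C \<noteq> 0"
  shows "(1-q*q^N)*(1-C*q^N) * sh q A B C (Suc N) = (1-A*q^N)*(1-B*q^N) * sh q A B C N"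
proof -
  define c1 where "c1 = (1-q*q^N)*(1-C*q^N)"
  define c2 where "c2 = (1-A*q^N)*(1-B*q^N)"
  define S where "S = (\<Sum>k\<le>N. sP q (A*B/C) (Suc N - k) * sQ q A B C k)"
  have PS: "(\<Sum>k\<le>N. (c1 * sP q (A*B/C) (Suc N - k) - c2 * sP q (A*B/C) (N-k)) * sQ q A B C k)
        = -(q^(N-N)) * sP q (A*B/C) (N-N) * sQ q A B C N * (1 - C/A*q^N) * (1 - C/B*q^N) * (A*B/C)"
    unfolding c1_def c2_def by (rule saal_partial[OF q Cn nz]) simp
  also have "\<dots> = -(sQ q A B C N * (1 - C/A*q^N) * (1 - C/B*q^N) * (A*B/C))"
    by (simp add: sP_def)
  also have "\<dots> = -(sQ q A B C (Suc N) * c1)"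
    unfolding c1_def sQ_Suc[OF q Cn nz(1,2), symmetric] by (simp add: ac_simps)
  finally have PS': "(\<Sum>k\<le>N. (c1 * sP q (A*B/C) (Suc N - k) - c2 * sP q (A*B/C) (N-k)) * sQ q A B C k)
      = -(sQ q A B C (Suc N) * c1)" .
  have "(\<Sum>k\<le>N. (c1 * sP q (A*B/C) (Suc N - k) - c2 * sP q (A*B/C) (N-k)) * sQ q A B C k)
      = c1 * S - c2 * sh q A B C N"
    unfolding S_def sh_def by (simp add: sum_subtractf sum_distrib_left algebra_simps)
  hence e1: "c1 * S = c2 * sh q A B C N - sQ q A B C (Suc N) * c1" using PS' by (simp add: algebra_simps)
  have e2: "sh q A B C (Suc N) = S + sQ q A B C (Suc N)"
    unfolding sh_def S_def by (simp add: sP_def)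
  show ?thesis unfolding c1_def[symmetric] c2_def[symmetric] e2 using e1 by (simp add: algebra_simps)
qed

lemma sh_closed:
  assumes q: "norm q < 1" and Cn: "\<And>n. qpoch C q n \<noteq> 0"
    and nz: "A \<noteq> 0" "B \<noteq> 0" "C \<noteq> 0"
  shows "sh q A B C N * qpoch q q N * qpoch C q N = qpoch A q N * qpoch B q N"
proof (induction N)
  case 0
  show ?case by (simp add: sh_def sP_def sQ_def)
next
  case (Suc N)
  have "sh q A B C (Suc N) * qpoch q q (Suc N) * qpoch C q (Suc N)
        = ((1-q*q^N)*(1-C*q^N) * sh q A B C (Suc N)) * qpoch q q N * qpoch C q N"
    by (simp add: qpoch_Suc ac_simps)
  also have "\<dots> = (1-A*q^N)*(1-B*q^N) * (sh q A B C N * qpoch q q N * qpoch C q N)"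
    unfolding sh_rec[OF q Cn nz] by (simp add: ac_simps)
  also have "\<dots> = qpoch A q (Suc N) * qpoch B q (Suc N)"
    unfolding Suc.IH by (simp add: qpoch_Suc ac_simps)
  finally show ?case .
qed

lemma suminf_swap_bound:
  fixes f :: "nat \<Rightarrow> nat \<Rightarrow> complex"
  assumes bound: "\<And>n k. norm (f n k) \<le> M n * Bk k" and M: "summable M" and Bs: "summable Bk"
    and M0: "\<And>n. 0 \<le> M n" and B0: "\<And>k. 0 \<le> Bk k"
  shows "(\<Sum>n. \<Sum>k. f n k) = (\<Sum>k. \<Sum>n. f n k)"
proof -
  have hs1: "((\<lambda>k. M n * Bk k) has_sum (M n * suminf Bk)) UNIV" for n
  proof (rule norm_summable_imp_has_sum)
    show "summable (\<lambda>k. norm (M n * Bk k))" using summable_mult[OF Bs, of "M n"] M0 B0 by simp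
    show "(\<lambda>k. M n * Bk k) sums (M n * suminf Bk)" by (intro sums_mult summable_sums Bs)
  qed
  have gs: "(\<lambda>n. M n * suminf Bk) summable_on UNIV"
    by (rule norm_summable_imp_summable_on) (use summable_mult2[OF M, of "suminf Bk"] M0 suminf_nonneg[OF Bs B0] in simp)
  have ps: "(\<lambda>(n, k). M n * Bk k) summable_on Sigma UNIV (\<lambda>_. UNIV)"
    by (rule summable_on_SigmaI[where g = "\<lambda>n. M n * suminf Bk"]) (use hs1 gs M0 B0 in auto)
  have fabs: "(\<lambda>x. norm ((\<lambda>(n, k). f n k) x)) summable_on UNIV \<times> UNIV"
  proof (rule Infinite_Sum.abs_summable_on_comparison_test)
    show "(\<lambda>x. norm ((\<lambda>(n, k). M n * Bk k) x)) summable_on UNIV \<times> UNIV"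
      using ps M0 B0 by (simp add: case_prod_unfold abs_mult)
    show "norm ((\<lambda>(n, k). f n k) x) \<le> norm ((\<lambda>(n, k). M n * Bk k) x)" for x
      using bound[of "fst x" "snd x"] M0 B0 by (cases x) (simp add: abs_mult)
  qed
  hence fs: "(\<lambda>(n, k). f n k) summable_on UNIV \<times> UNIV" by (rule abs_summable_summable)
  have sw: "infsum (\<lambda>n. infsum (\<lambda>k. f n k) UNIV) UNIV = infsum (\<lambda>k. infsum (\<lambda>n. f n k) UNIV) UNIV"
    by (rule infsum_swap_banach[OF fs])
  have row: "summable (\<lambda>k. norm (f n k))" for n
    by (rule summable_comparison_test[OF _ summable_mult[OF Bs, of "M n"]]) (use bound in auto)
  have col: "summable (\<lambda>n. norm (f n k))" for k
    by (rule summable_comparison_test[OF _ summable_mult2[OF M, of "Bk k"]]) (use bound in auto)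
  have i1: "infsum (\<lambda>k. f n k) UNIV = (\<Sum>k. f n k)" for n
    by (rule infsumI, rule norm_summable_imp_has_sum[OF row]) (intro summable_sums summable_norm_cancel[OF row])
  have i2: "infsum (\<lambda>n. f n k) UNIV = (\<Sum>n. f n k)" for k
    by (rule infsumI, rule norm_summable_imp_has_sum[OF col]) (intro summable_sums summable_norm_cancel[OF col])
  have rb: "norm (\<Sum>k. f n k) \<le> M n * suminf Bk" for n
  proof -
    have "norm (\<Sum>k. f n k) \<le> (\<Sum>k. norm (f n k))" by (rule summable_norm[OF row])
    also have "\<dots> \<le> (\<Sum>k. M n * Bk k)" by (rule suminf_le[OF bound row summable_mult[OF Bs]])
    also have "\<dots> = M n * suminf Bk" by (rule suminf_mult[OF Bs])
    finally show ?thesis .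
  qed
  have cb: "norm (\<Sum>n. f n k) \<le> suminf M * Bk k" for k
  proof -
    have "norm (\<Sum>n. f n k) \<le> (\<Sum>n. norm (f n k))" by (rule summable_norm[OF col])
    also have "\<dots> \<le> (\<Sum>n. M n * Bk k)" by (rule suminf_le[OF bound col summable_mult2[OF M]])
    also have "\<dots> = suminf M * Bk k" by (rule suminf_mult2[OF M, symmetric])
    finally show ?thesis .
  qed
  have rs: "summable (\<lambda>n. norm (\<Sum>k. f n k))"
    by (rule summable_comparison_test[OF _ summable_mult2[OF M, of "suminf Bk"]]) (use rb in auto)
  have cs: "summable (\<lambda>k. norm (\<Sum>n. f n k))"
    by (rule summable_comparison_test[OF _ summable_mult[OF Bs, of "suminf M"]]) (use cb in auto)
  have o1: "infsum (\<lambda>n. \<Sum>k. f n k) UNIV = (\<Sum>n. \<Sum>k. f n k)"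
    by (rule infsumI, rule norm_summable_imp_has_sum[OF rs]) (intro summable_sums summable_norm_cancel[OF rs])
  have o2: "infsum (\<lambda>k. \<Sum>n. f n k) UNIV = (\<Sum>k. \<Sum>n. f n k)"
    by (rule infsumI, rule norm_summable_imp_has_sum[OF cs]) (intro summable_sums summable_norm_cancel[OF cs])
  show ?thesis using sw unfolding i1 i2 o1 o2 .
qed

lemma termwise:
  fixes q z x g a b C :: complex
  assumes xg: "x = g * z"
    and nz: "qpoch q q n \<noteq> 0" "qpoch z q n \<noteq> 0" "qpoch q q k \<noteq> 0" "qpoch C q k \<noteq> 0"
       "qpoch (z * q ^ n) q k \<noteq> 0" "qpoch (x * q ^ (2 * n)) q k \<noteq> 0" "qpoch z q k \<noteq> 0"
       "qpoch (z * q ^ k) q n \<noteq> 0"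
  shows "(qpoch (g * q) q n * qpoch x q n / (qpoch q q n * qpoch z q n) * z ^ n * q ^ (n * (n - 1)) * (1 - x * q ^ (2 * n)))
       * (qpoch (x * q ^ n) q k * qpoch (x * q ^ (2 * n + 1)) q k * qpoch a q k * qpoch b q k
          / (qpoch q q k * qpoch C q k * qpoch (z * q ^ n) q k * qpoch (x * q ^ (2 * n)) q k) * (x * q ^ n) ^ k)
     = (qpoch a q k * qpoch b q k / (qpoch q q k * qpoch C q k) * g ^ k * z ^ k * qpoch x q k / qpoch z q k)
       * (qpoch (g * q) q n * qpoch (g * (q ^ k * z)) q n / (qpoch q q n * qpoch (q ^ k * z) q n)
          * (q ^ k * z) ^ n * q ^ (n * (n - 1)) * (1 - g * (q ^ k * z) * q ^ (2 * n)))"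
proof -
  have R1: "qpoch x q n * qpoch (x * q ^ n) q k = qpoch x q k * qpoch (x * q ^ k) q n"
    using qpoch_add[of x q n k] qpoch_add[of x q k n] by (simp add: add.commute)
  have R2: "qpoch z q n * qpoch (z * q ^ n) q k = qpoch z q k * qpoch (z * q ^ k) q n"
    using qpoch_add[of z q n k] qpoch_add[of z q k n] by (simp add: add.commute)
  have R3: "(1 - x * q ^ (2 * n)) * qpoch (x * q ^ (2 * n + 1)) q k = qpoch (x * q ^ (2 * n)) q k * (1 - x * q ^ (2 * n + k))"
  proof -
    have a1: "x * q ^ (2 * n + 1) = x * q ^ (2 * n) * q" by (simp add: power_add mult.assoc)
    have a2: "x * q ^ (2 * n + k) = x * q ^ (2 * n) * q ^ k" by (simp add: power_add mult.assoc)
    show ?thesis unfolding a1 a2 qpoch_Suc'[symmetric] qpoch_Suc ..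
  qed
  have e1: "g * (q ^ k * z) = x * q ^ k" by (simp add: xg ac_simps)
  have e2: "(q ^ k * z) ^ n = q ^ (n * k) * z ^ n" by (simp add: power_mult_distrib power_mult[symmetric] mult.commute)
  have e3: "(x * q ^ n) ^ k = x ^ k * q ^ (n * k)" by (simp add: power_mult_distrib power_mult[symmetric])
  have e4: "g ^ k * z ^ k = x ^ k" by (simp add: xg power_mult_distrib)
  have e5: "1 - g * (q ^ k * z) * q ^ (2 * n) = 1 - x * q ^ (2 * n + k)" by (simp add: xg power_add ac_simps)
  have e6: "q ^ k * z = z * q ^ k" by (simp add: mult.commute)
  define K0 where "K0 = qpoch (g * q) q n * qpoch a q k * qpoch b q k * x ^ k * q ^ (n * k) * z ^ n * q ^ (n * (n - 1))
      / (qpoch q q n * qpoch q q k * qpoch C q k)"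
  have L: "(qpoch (g * q) q n * qpoch x q n / (qpoch q q n * qpoch z q n) * z ^ n * q ^ (n * (n - 1)) * (1 - x * q ^ (2 * n)))
       * (qpoch (x * q ^ n) q k * qpoch (x * q ^ (2 * n + 1)) q k * qpoch a q k * qpoch b q k
          / (qpoch q q k * qpoch C q k * qpoch (z * q ^ n) q k * qpoch (x * q ^ (2 * n)) q k) * (x * q ^ n) ^ k)
     = K0 * ((qpoch x q n * qpoch (x * q ^ n) q k) / (qpoch z q n * qpoch (z * q ^ n) q k))
          * (((1 - x * q ^ (2 * n)) * qpoch (x * q ^ (2 * n + 1)) q k) / qpoch (x * q ^ (2 * n)) q k)"
    unfolding e3 K0_def using nz by (simp add: field_simps)
  have R: "(qpoch a q k * qpoch b q k / (qpoch q q k * qpoch C q k) * g ^ k * z ^ k * qpoch x q k / qpoch z q k)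
       * (qpoch (g * q) q n * qpoch (g * (q ^ k * z)) q n / (qpoch q q n * qpoch (q ^ k * z) q n)
          * (q ^ k * z) ^ n * q ^ (n * (n - 1)) * (1 - g * (q ^ k * z) * q ^ (2 * n)))
     = K0 * ((qpoch x q k * qpoch (x * q ^ k) q n) / (qpoch z q k * qpoch (z * q ^ k) q n))
          * (1 - x * q ^ (2 * n + k))"
  proof -
    have "g ^ k * z ^ k * qpoch x q k = x ^ k * qpoch x q k" by (simp add: e4)
    show ?thesis
      unfolding e5 e2 unfolding e1 unfolding e6 K0_def using nz
      by (simp add: field_simps e4[symmetric])
  qed
  show ?thesis unfolding L R R1 R2 R3 using nz(6) by simp
qed

lemma sum_reflect: "(\<Sum>i\<le>N. f i (N - i)) = (\<Sum>k\<le>N. f (N - k) (k::nat))"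
  by (rule sum.reindex_bij_witness[of _ "\<lambda>k. N - k" "\<lambda>k. N - k"]) auto

theorem corollary3p2:
  fixes A B C q z :: complex
  assumes "norm q < 1" and "norm z < 1"
    and "A \<noteq> 0" and "B \<noteq> 0" and "C \<noteq> 0"
    and "\<And>n. qpoch C q n \<noteq> 0"
    and "\<And>n. qpoch z q n \<noteq> 0"
    and "\<And>n k. qpoch (z * q ^ n) q k \<noteq> 0"
    and "\<And>n k. qpoch (A * B * z * q ^ (2 * n) / C) q k \<noteq> 0"
    and "\<And>n. summable (qphi_term
                 [A * B * z * q ^ n / C, A * B * z * q ^ (2 * n + 1) / C, C / A, C / B]
                 [C, z * q ^ n, A * B * z * q ^ (2 * n) / C] q (A * B * z * q ^ n / C))"
    and "summable (\<lambda>n. qpochs [A * B * q / C, A * B * z / C] q n / qpochs [q, z] q n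
                 * z ^ n * q ^ (n * (n - 1)) * (1 - A * B * z * q ^ (2 * n) / C)
                 * qphi [A * B * z * q ^ n / C, A * B * z * q ^ (2 * n + 1) / C, C / A, C / B]
                        [C, z * q ^ n, A * B * z * q ^ (2 * n) / C] q (A * B * z * q ^ n / C))"
  shows "qphi [A, B] [C] q z =
    (\<Sum>n. qpochs [A * B * q / C, A * B * z / C] q n / qpochs [q, z] q n
                 * z ^ n * q ^ (n * (n - 1)) * (1 - A * B * z * q ^ (2 * n) / C)
                 * qphi [A * B * z * q ^ n / C, A * B * z * q ^ (2 * n + 1) / C, C / A, C / B]
                        [C, z * q ^ n, A * B * z * q ^ (2 * n) / C] q (A * B * z * q ^ n / C))"
proof -
  note q = assms(1) and zz = assms(2) and nA = assms(3) and nB = assms(4) and nC = assms(5)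
    and Cn = assms(6) and zn = assms(7) and zqn = assms(8) and xn = assms(9) and s4 = assms(10)
  define g where "g = A * B / C"
  define x where "x = A * B * z / C"
  have xg: "x = g * z" by (simp add: x_def g_def)
  have ex: "A * B * z * q ^ m / C = x * q ^ m" for m by (simp add: x_def)
  have xq2: "qpoch (x * q ^ (2 * n)) q k \<noteq> 0" for n k using xn[of n k] unfolding ex by assumption
  have xi: "1 - x * q ^ i \<noteq> 0" for i
    using xq2[of 0 "Suc i"] by (simp add: qpoch_Suc)
  have px: "qpoch x q k \<noteq> 0" for k using xq2[of 0 k] by simp
  have sA: "A \<noteq> 0" "B \<noteq> 0" "C \<noteq> 0" by (fact nA nB nC)+
  have LHS: "qphi [A, B] [C] q z = (\<Sum>N. sh q A B C N * z ^ N)"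
  proof -
    have "qphi_term [A, B] [C] q z N = sh q A B C N * z ^ N" for N
    proof -
      have "sh q A B C N * qpoch q q N * qpoch C q N = qpoch A q N * qpoch B q N"
        by (rule sh_closed[OF q Cn sA])
      hence "sh q A B C N = qpoch A q N * qpoch B q N / (qpoch q q N * qpoch C q N)"
        using qpoch_qq_nz[OF q, of N] Cn[of N] by (simp add: field_simps)
      thus ?thesis by (simp add: qphi_term_def qpochs_def)
    qed
    thus ?thesis by (simp add: qphi_def)
  qed
  define bk where "bk k = sQ q A B C k * z ^ k * qpoch x q k / qpoch z q k" for k
  have sums: "summable (\<lambda>k. norm (sQ q A B C k * z ^ k)) \<and> summable (\<lambda>k. norm (bk k))"
  proof (cases "\<exists>i. 1 - C/A*q^i = 0 \<or> 1 - C/B*q^i = 0")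
    case True
    then obtain i where i: "1 - C/A*q^i = 0 \<or> 1 - C/B*q^i = 0" by blast
    have z0: "sQ q A B C k = 0" if "k \<notin> {..i}" for k
    proof -
      have "i \<in> {..<k}" using that by auto
      hence "qpoch (C/A) q k = 0 \<or> qpoch (C/B) q k = 0"
        using i unfolding qpoch_def by (metis finite_lessThan prod_zero)
      thus ?thesis by (auto simp: sQ_def)
    qed
    show ?thesis
      by (intro conjI summable_finite[of "{..i}"]) (auto simp: z0 bk_def)
  next
    case False
    hence fa: "\<And>i. 1 - C/A*q^i \<noteq> 0" "\<And>i. 1 - C/B*q^i \<noteq> 0" by auto
    have s0: "summable (qphi_term [x, x*q, C/A, C/B] [C, z, x] q x)"
    proof -
      have l: "A * B * z * q ^ 0 / C = x" "A * B * z * q ^ (2 * 0 + 1) / C = x * q"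
              "z * q ^ 0 = z" "A * B * z * q ^ (2 * 0) / C = x" by (simp_all add: x_def)
      show ?thesis using s4[of 0] unfolding l .
    qed
    have t0: "qphi_term [x, x*q, C/A, C/B] [C, z, x] q x \<longlonglongrightarrow> 0" by (rule summable_LIMSEQ_zero[OF s0])
    have form: "qphi_term [x, x*q, C/A, C/B] [C, z, x] q x k
        = (qpoch (x*q) q k * qpoch (C/A) q k * qpoch (C/B) q k) / (qpoch q q k * qpoch C q k * qpoch z q k) * x ^ k" for k
      using px[of k] qpoch_qq_nz[OF q, of k] Cn[of k] zn[of k]
      by (simp add: qphi_term_def qpochs_def field_simps)
    obtain L1 where L1: "(\<lambda>k. qpoch (x*q) q k) \<longlonglongrightarrow> L1" "(\<forall>i. 1 - x*q*q^i \<noteq> 0) \<Longrightarrow> L1 \<noteq> 0"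
      using qpoch_lim[OF q] by blast
    obtain L2 where L2: "(\<lambda>k. qpoch (C/A) q k) \<longlonglongrightarrow> L2" "(\<forall>i. 1 - C/A*q^i \<noteq> 0) \<Longrightarrow> L2 \<noteq> 0"
      using qpoch_lim[OF q] by blast
    obtain L3 where L3: "(\<lambda>k. qpoch (C/B) q k) \<longlonglongrightarrow> L3" "(\<forall>i. 1 - C/B*q^i \<noteq> 0) \<Longrightarrow> L3 \<noteq> 0"
      using qpoch_lim[OF q] by blast
    obtain L4 where L4: "(\<lambda>k. qpoch q q k) \<longlonglongrightarrow> L4" using qpoch_lim[OF q] by blast
    obtain L5 where L5: "(\<lambda>k. qpoch C q k) \<longlonglongrightarrow> L5" using qpoch_lim[OF q] by blast
    obtain L6 where L6: "(\<lambda>k. qpoch z q k) \<longlonglongrightarrow> L6" using qpoch_lim[OF q] by blast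
    have xqi: "\<forall>i. 1 - x*q*q^i \<noteq> 0" using xi by (metis mult.assoc power_Suc)
    have nx: "norm x < 1"
    proof (rule dich_aux)
      show "(\<lambda>k. qpoch (x*q) q k * qpoch (C/A) q k * qpoch (C/B) q k) \<longlonglongrightarrow> L1 * L2 * L3"
        by (intro tendsto_mult L1(1) L2(1) L3(1))
      show "L1 * L2 * L3 \<noteq> 0" using L1(2)[OF xqi] L2(2) L3(2) fa by auto
      show "(\<lambda>k. qpoch q q k * qpoch C q k * qpoch z q k) \<longlonglongrightarrow> L4 * L5 * L6"
        by (intro tendsto_mult L4 L5 L6)
      show "(\<lambda>k. qpoch (x*q) q k * qpoch (C/A) q k * qpoch (C/B) q k / (qpoch q q k * qpoch C q k * qpoch z q k) * x ^ k) \<longlonglongrightarrow> 0"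
        using t0 unfolding form .
      show "qpoch q q k * qpoch C q k * qpoch z q k \<noteq> 0" for k
        using qpoch_qq_nz[OF q, of k] Cn[of k] zn[of k] by simp
    qed
    have rQ: "sQ q A B C (Suc k) * z ^ Suc k = ((1 - C/A*q^k) * (1 - C/B*q^k) * g * z / ((1 - q*q^k) * (1 - C*q^k))) * (sQ q A B C k * z ^ k)" for k
    proof -
      have n1: "1 - q*q^k \<noteq> 0" by (rule one_minus_qq_nz[OF q])
      have n2: "1 - C*q^k \<noteq> 0" using Cn[of "Suc k"] by (simp add: qpoch_Suc)
      define T where "T = (1 - C/A*q^k) * (1 - C/B*q^k) * g"
      define D where "D = (1 - q*q^k) * (1 - C*q^k)"
      have d: "D \<noteq> 0" using n1 n2 by (simp add: D_def)
      have "sQ q A B C (Suc k) * (1 - q*q^k) * (1 - C*q^k) = sQ q A B C k * (1 - C/A*q^k) * (1 - C/B*q^k) * g"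
        unfolding g_def by (rule sQ_Suc[OF q Cn nA nB])
      hence "sQ q A B C (Suc k) * D = sQ q A B C k * T" by (simp add: D_def T_def ac_simps)
      hence e: "sQ q A B C (Suc k) = sQ q A B C k * T / D" by (subst nonzero_eq_divide_eq[OF d])
      have "sQ q A B C (Suc k) * z ^ Suc k = (T * z / D) * (sQ q A B C k * z ^ k)"
        unfolding e using d by (simp add: field_simps)
      thus ?thesis by (simp add: T_def D_def)
    qed
    have limQ: "(\<lambda>k. (1 - C/A*q^k) * (1 - C/B*q^k) * g * z / ((1 - q*q^k) * (1 - C*q^k))) \<longlonglongrightarrow> x"
    proof -
      have "(\<lambda>k. (1 - C/A*q^k) * (1 - C/B*q^k) * g * z / ((1 - q*q^k) * (1 - C*q^k)))
            \<longlonglongrightarrow> (1 - C/A*0) * (1 - C/B*0) * g * z / ((1 - q*0) * (1 - C*0))"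
        by (intro tendsto_intros qpow_lim0 q) simp
      thus ?thesis by (simp add: xg)
    qed
    have sQs: "summable (\<lambda>k. norm (sQ q A B C k * z ^ k))"
      by (rule ratio_summable[OF rQ limQ nx])
    have rB: "bk (Suc k) = (((1 - C/A*q^k) * (1 - C/B*q^k) * g * z / ((1 - q*q^k) * (1 - C*q^k))) * ((1 - x*q^k) / (1 - z*q^k))) * bk k" for k
    proof -
      have n3: "1 - z*q^k \<noteq> 0" using zn[of "Suc k"] by (simp add: qpoch_Suc)
      have "bk (Suc k) = (sQ q A B C (Suc k) * z ^ Suc k) * (qpoch x q k * (1 - x*q^k)) / (qpoch z q k * (1 - z*q^k))"
        by (simp add: bk_def qpoch_Suc)
      also have "\<dots> = (((1 - C/A*q^k) * (1 - C/B*q^k) * g * z / ((1 - q*q^k) * (1 - C*q^k))) * (sQ q A B C k * z ^ k)) * (qpoch x q k * (1 - x*q^k)) / (qpoch z q k * (1 - z*q^k))"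
        by (simp only: rQ)
      also have "\<dots> = (((1 - C/A*q^k) * (1 - C/B*q^k) * g * z / ((1 - q*q^k) * (1 - C*q^k))) * ((1 - x*q^k) / (1 - z*q^k))) * bk k"
        using n3 zn[of k] by (simp add: bk_def field_simps)
      finally show ?thesis .
    qed
    have limB: "(\<lambda>k. ((1 - C/A*q^k) * (1 - C/B*q^k) * g * z / ((1 - q*q^k) * (1 - C*q^k))) * ((1 - x*q^k) / (1 - z*q^k))) \<longlonglongrightarrow> x * ((1 - x*0) / (1 - z*0))"
      by (intro tendsto_intros limQ qpow_lim0 q) simp
    have bks: "summable (\<lambda>k. norm (bk k))"
      by (rule ratio_summable[OF rB limB]) (simp add: nx)
    show ?thesis using sQs bks by simp
  qed
  have sQs: "summable (\<lambda>k. norm (sQ q A B C k * z ^ k))" using sums by blast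
  have bks: "summable (\<lambda>k. norm (bk k))" using sums by blast
  have Euler: "(\<Sum>N. sh q A B C N * z ^ N) = qE q g z * (\<Sum>k. sQ q A B C k * z ^ k)"
  proof -
    have cp: "qE q g z * (\<Sum>k. sQ q A B C k * z ^ k) =
        (\<Sum>N. \<Sum>i\<le>N. (qpoch g q i / qpoch q q i * z ^ i) * (sQ q A B C (N - i) * z ^ (N - i)))"
      unfolding qE_def by (rule Cauchy_product[OF qE_summable[OF q zz] sQs])
    have "(\<Sum>i\<le>N. (qpoch g q i / qpoch q q i * z ^ i) * (sQ q A B C (N - i) * z ^ (N - i))) = sh q A B C N * z ^ N" for N
    proof -
      have "(\<Sum>i\<le>N. (qpoch g q i / qpoch q q i * z ^ i) * (sQ q A B C (N - i) * z ^ (N - i)))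
          = (\<Sum>i\<le>N. (sP q g i * sQ q A B C (N - i)) * z ^ N)"
      proof (rule sum.cong)
        fix i assume "i \<in> {..N}"
        hence "z ^ i * z ^ (N - i) = z ^ N" by (simp add: power_add[symmetric])
        thus "(qpoch g q i / qpoch q q i * z ^ i) * (sQ q A B C (N - i) * z ^ (N - i)) = (sP q g i * sQ q A B C (N - i)) * z ^ N"
          by (simp add: sP_def)
      qed simp
      also have "\<dots> = (\<Sum>i\<le>N. sP q g i * sQ q A B C (N - i)) * z ^ N" by (simp add: sum_distrib_right)
      also have "(\<Sum>i\<le>N. sP q g i * sQ q A B C (N - i)) = sh q A B C N"
        unfolding sh_def g_def by (rule sum_reflect[where f = "\<lambda>i j. sP q (A * B / C) i * sQ q A B C j"])
      finally show ?thesis .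
    qed
    thus ?thesis using cp by simp
  qed
  have Rn: "qpochs [A * B * q / C, A * B * z / C] q n / qpochs [q, z] q n
                 * z ^ n * q ^ (n * (n - 1)) * (1 - A * B * z * q ^ (2 * n) / C)
                 * qphi [A * B * z * q ^ n / C, A * B * z * q ^ (2 * n + 1) / C, C / A, C / B]
                        [C, z * q ^ n, A * B * z * q ^ (2 * n) / C] q (A * B * z * q ^ n / C)
        = (\<Sum>k. bk k * qv q g (q ^ k * z) n)" for n
  proof -
    have e: "A * B * q / C = g * q" "A * B * z / C = x" by (simp_all add: g_def x_def)
    have s: "summable (qphi_term [x * q ^ n, x * q ^ (2 * n + 1), C / A, C / B] [C, z * q ^ n, x * q ^ (2 * n)] q (x * q ^ n))"
      using s4[of n] unfolding ex .
    define pre where "pre = qpoch (g * q) q n * qpoch x q n / (qpoch q q n * qpoch z q n) * z ^ n * q ^ (n * (n - 1)) * (1 - x * q ^ (2 * n))"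
    have "qpochs [A * B * q / C, A * B * z / C] q n / qpochs [q, z] q n
                 * z ^ n * q ^ (n * (n - 1)) * (1 - A * B * z * q ^ (2 * n) / C)
                 * qphi [A * B * z * q ^ n / C, A * B * z * q ^ (2 * n + 1) / C, C / A, C / B]
                        [C, z * q ^ n, A * B * z * q ^ (2 * n) / C] q (A * B * z * q ^ n / C)
        = pre * qphi [x * q ^ n, x * q ^ (2 * n + 1), C / A, C / B] [C, z * q ^ n, x * q ^ (2 * n)] q (x * q ^ n)"
      unfolding e ex pre_def by (simp add: qpochs_def)
    also have "\<dots> = (\<Sum>k. pre * qphi_term [x * q ^ n, x * q ^ (2 * n + 1), C / A, C / B] [C, z * q ^ n, x * q ^ (2 * n)] q (x * q ^ n) k)"
      unfolding qphi_def by (rule suminf_mult[OF s, symmetric])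
    also have "\<dots> = (\<Sum>k. bk k * qv q g (q ^ k * z) n)"
    proof (rule suminf_cong)
      fix k
      have t: "qphi_term [x * q ^ n, x * q ^ (2 * n + 1), C / A, C / B] [C, z * q ^ n, x * q ^ (2 * n)] q (x * q ^ n) k
         = qpoch (x * q ^ n) q k * qpoch (x * q ^ (2 * n + 1)) q k * qpoch (C/A) q k * qpoch (C/B) q k
          / (qpoch q q k * qpoch C q k * qpoch (z * q ^ n) q k * qpoch (x * q ^ (2 * n)) q k) * (x * q ^ n) ^ k"
        by (simp add: qphi_term_def qpochs_def mult.assoc)
      have zqk: "qpoch (z * q ^ k) q n \<noteq> 0" by (rule zqn)
      show "pre * qphi_term [x * q ^ n, x * q ^ (2 * n + 1), C / A, C / B] [C, z * q ^ n, x * q ^ (2 * n)] q (x * q ^ n) k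
          = bk k * qv q g (q ^ k * z) n"
        unfolding t pre_def bk_def sQ_def qv_def g_def[symmetric]
        by (rule termwise[OF xg qpoch_qq_nz[OF q] zn qpoch_qq_nz[OF q] Cn zqn xq2 zn zqk])
    qed
    finally show ?thesis .
  qed
  have RHS: "(\<Sum>n. \<Sum>k. bk k * qv q g (q ^ k * z) n) = qE q g z * (\<Sum>k. sQ q A B C k * z ^ k)"
  proof -
    have nqz: "norm (q ^ k * z) \<le> norm z" for k
      using q by (simp add: norm_mult norm_power mult_left_le_one_le power_le_one)
    have nqz1: "norm (q ^ k * z) < 1" for k by (rule norm_qZ[OF q zz])
    have "(\<Sum>n. \<Sum>k. bk k * qv q g (q ^ k * z) n) = (\<Sum>k. \<Sum>n. bk k * qv q g (q ^ k * z) n)"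
    proof (rule suminf_swap_bound[where M = "qM q g (norm z)" and Bk = "\<lambda>k. norm (bk k)"])
      show "norm (bk k * qv q g (q ^ k * z) n) \<le> qM q g (norm z) n * norm (bk k)" for n k
        using qv_bound[OF q nqz[of k] zz, of g n] by (simp add: norm_mult mult.commute mult_left_mono)
      show "summable (qM q g (norm z))" by (rule qM_summable[OF q norm_ge_zero zz])
      show "summable (\<lambda>k. norm (bk k))" by (rule bks)
      show "0 \<le> qM q g (norm z) n" for n by (rule qM_nonneg[OF zz norm_ge_zero])
    qed simp
    also have "\<dots> = (\<Sum>k. sQ q A B C k * z ^ k * qE q g z)"
    proof (rule suminf_cong)
      fix k
      have "(\<Sum>n. bk k * qv q g (q ^ k * z) n) = bk k * qD q g (q ^ k * z)"
        unfolding qD_def by (rule suminf_mult[OF summable_norm_cancel[OF qv_summable[OF q nqz1]]])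
      also have "\<dots> = bk k * qE q g (q ^ k * z)" by (simp add: qD_eq_qE[OF q nqz1])
      also have "\<dots> = sQ q A B C k * z ^ k * qE q g z"
      proof -
        have fi: "qE q g z * qpoch z q k = qpoch (g * z) q k * qE q g (q ^ k * z)"
          by (rule fe_iter[of "qE q g" g q z k, OF qE_fe[OF q] q zz])
        show ?thesis using fi px[of k] zn[of k] unfolding bk_def xg[symmetric]
          by (simp add: field_simps)
      qed
      finally show "(\<Sum>n. bk k * qv q g (q ^ k * z) n) = sQ q A B C k * z ^ k * qE q g z" .
    qed
    also have "\<dots> = (\<Sum>k. sQ q A B C k * z ^ k) * qE q g z"
      by (rule suminf_mult2[OF summable_norm_cancel[OF sQs], symmetric])
    also have "\<dots> = qE q g z * (\<Sum>k. sQ q A B C k * z ^ k)" by (rule mult.commute)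
    finally show ?thesis .
  qed
  show ?thesis unfolding LHS Euler Rn RHS ..
qed

end
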